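(* Consider, for $N\ge2$ and $\varepsilon>0$, the one-dimensional system $$\dot x_i=v_i,\qquad \dot v_i=-\frac1{\varepsilon^2N}\sum_{j\ne i}g'(x_i-x_j)-\frac1{\varepsilon^2}V'(x_i),\qquad 1\le i\le N,$$ with $g(x)=-|x|$ and $V(x)=|x|^2$, and let $\mu_V$ be the associated equilibrium measure. There exists a sequence of initial positions $X_N^\circ=(x_1^\circ,\dots,x_N^\circ)$ such that $\mathsf{F}_N(X_N^\circ,\mu_V)\to0$ and $\frac1N\sum_i\delta_{x_i^\circ}\rightharpoonup\mu_V$ as $N\to\infty$, but such that if $v_i^\circ=0$ for every $i$, the empirical current $J_N^t:=\frac1N\sum_{i=1}^Nv_i^t\delta_{x_i^t}$ of the corresponding solution (i) converges to zero (the unique solution of the Lake equation with zero initial datum) uniformly in $t\in[0,\infty)$ as $\varepsilon+N^{-1}\to0$, if $\varepsilon N\to\infty$; (ii) has no weak limit as $\varepsilon+N^{-1}\to0$, for any $t\in(0,\infty)$, if $\varepsilon N\not\to\infty$.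
   Context: The equilibrium measure $\mu_V$ is the unique minimizer over probability measures on $\mathbb{R}$ of $\int Vd\mu+\frac12\iint g(x-y)d\mu(x)d\mu(y)$. The modulated potential energy is $\mathsf{F}_N(X_N,\mu):=\frac12\iint_{\mathbb{R}^2\setminus\triangle}g(x-y)\,d(\frac1N\sum_i\delta_{x_i}-\mu)^{\otimes2}(x,y)$, $\triangle$ the diagonal. The Lake equation here is $\partial_tu+u\partial_xu=-\partial_xp$, $\partial_x(\mu_Vu)=0$ on the support of $\mu_V$. In the limit $\varepsilon$ may depend on $N$. *)

theory Defs
  imports "HOL-Probability.Probability"
begin

definition gfun :: "real \<Rightarrow> real" where
  "gfun x = - \<bar>x\<bar>"

definition Vfun :: "real \<Rightarrow> real" where
  "Vfun x = x\<^sup>2"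

text \<open>g' : the derivative of g away from 0, with the convention g'(0) = 0
  (value at coinciding particles).\<close>
definition gder :: "real \<Rightarrow> real" where
  "gder x = (if x = 0 then 0 else deriv gfun x)"

text \<open>Admissible probability measures on the real line (finite V-moment;
  all others have infinite energy).\<close>
definition admissible :: "real measure \<Rightarrow> bool" where
  "admissible \<mu> \<longleftrightarrow> prob_space \<mu> \<and> sets \<mu> = sets borel \<and> integrable \<mu> Vfun"

definition energy :: "real measure \<Rightarrow> real" where
  "energy \<mu> = (\<integral>x. Vfun x \<partial>\<mu>) + 1/2 * (\<integral>x. (\<integral>y. gfun (x - y) \<partial>\<mu>) \<partial>\<mu>)"

definition equilibrium_measure :: "real measure" where
  "equilibrium_measure =
     (THE \<mu>. admissible \<mu> \<and> (\<forall>\<nu>. admissible \<nu> \<longrightarrow> energy \<mu> \<le> energy \<nu>))"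

text \<open>Modulated energy F_N(X_N, mu); the configuration is x i, i < N.
  Since g(0) = 0, removing the diagonal has no effect except for the
  exclusion i \<noteq> j in the particle-particle term.\<close>
definition modulated_energy :: "nat \<Rightarrow> (nat \<Rightarrow> real) \<Rightarrow> real measure \<Rightarrow> real" where
  "modulated_energy N x \<mu> = 1/2 *
     ( (1 / (real N)\<^sup>2) * (\<Sum>i<N. \<Sum>j\<in>{..<N} - {i}. gfun (x i - x j))
       - (2 / real N) * (\<Sum>i<N. \<integral>y. gfun (x i - y) \<partial>\<mu>)
       + (\<integral>x. (\<integral>y. gfun (x - y) \<partial>\<mu>) \<partial>\<mu>) )"

definition bounded_continuous_fun :: "(real \<Rightarrow> real) \<Rightarrow> bool" where
  "bounded_continuous_fun \<phi> \<longleftrightarrow> continuous_on UNIV \<phi> \<and> bounded (range \<phi>)"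

definition is_solution ::
  "real \<Rightarrow> nat \<Rightarrow> (nat \<Rightarrow> real) \<Rightarrow> (real \<Rightarrow> nat \<Rightarrow> real) \<Rightarrow> (real \<Rightarrow> nat \<Rightarrow> real) \<Rightarrow> bool" where
  "is_solution \<epsilon> N x0 x v \<longleftrightarrow>
     (\<forall>i<N. x 0 i = x0 i \<and> v 0 i = 0) \<and>
     (\<forall>t\<ge>0. \<forall>i<N.
        ((\<lambda>s. x s i) has_real_derivative v t i) (at t within {0..}) \<and>
        ((\<lambda>s. v s i) has_real_derivative
           (- (1 / (\<epsilon>\<^sup>2 * real N)) * (\<Sum>j\<in>{..<N} - {i}. gder (x t i - x t j))
            - (1 / \<epsilon>\<^sup>2) * deriv Vfun (x t i))) (at t within {0..}))"

definition current_pairing ::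
  "nat \<Rightarrow> (real \<Rightarrow> nat \<Rightarrow> real) \<Rightarrow> (real \<Rightarrow> nat \<Rightarrow> real) \<Rightarrow> real \<Rightarrow> (real \<Rightarrow> real) \<Rightarrow> real" where
  "current_pairing N x v t \<phi> = (1 / real N) * (\<Sum>i<N. v t i * \<phi> (x t i))"

definition bounded_regime :: "real \<Rightarrow> (real \<times> nat) filter" where
  "bounded_regime C = inf (at_right 0 \<times>\<^sub>F at_top) (principal {(\<epsilon>, N). \<epsilon> * real N \<le> C})"

end

theory Submission
  imports Defs
begin

definition U :: "real measure" where "U = density lborel (\<lambda>x. ennreal (indicator {-1/2..1/2::real} x))"
lemma sets_U[simp, measurable_cong]: "sets U = sets borel" by (simp add: U_def)
lemma space_U[simp]: "space U = UNIV" by (simp add: U_def)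
lemma U_int:
  fixes f :: "real \<Rightarrow> real"
  assumes "continuous_on {-1/2..1/2} f" "f \<in> borel_measurable borel"
  shows "integrable U f" "integral\<^sup>L U f = integral {-1/2..1/2} f"
proof -
  have si: "set_integrable lborel {-1/2..1/2::real} f"
    by (rule borel_integrable_atLeastAtMost'[OF assms(1)])
  show "integrable U f" unfolding U_def
    using si unfolding set_integrable_def
    by (subst integrable_density) (use assms(2) in auto)
  have "integral\<^sup>L U f = (LINT x:{-1/2..1/2}|lborel. f x)" unfolding U_def set_lebesgue_integral_def
    by (subst integral_density) (use assms(2) in auto)
  also have "\<dots> = integral {-1/2..1/2} f" by (rule set_borel_integral_eq_integral(2)[OF si])
  finally show "integral\<^sup>L U f = integral {-1/2..1/2} f" .
qed
lemma prob_U: "prob_space U"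
proof
  have "emeasure U (space U) = emeasure lborel {-1/2..1/2::real}"
    unfolding U_def by (subst emeasure_density) (auto simp: ennreal_indicator)
  then show "emeasure U (space U) = 1" by simp
qed

lemma ftc_real:
  fixes F f :: "real \<Rightarrow> real"
  assumes "a \<le> b" "\<And>y. (F has_real_derivative f y) (at y)"
  shows "integral {a..b} f = F b - F a"
proof -
  have "(f has_integral (F b - F a)) {a..b}"
    apply (rule fundamental_theorem_of_calculus[OF assms(1)])
    using assms(2) by (auto simp: has_real_derivative_iff_has_vector_derivative[symmetric]
        intro: has_field_derivative_at_within)
  then show ?thesis by (rule integral_unique)
qed

lemma int_abs_right:
  fixes x a b :: real
  assumes "a \<le> b" "b \<le> x"
  shows "integral {a..b} (\<lambda>y. \<bar>x - y\<bar>) = x*(b-a) - (b\<^sup>2-a\<^sup>2)/2"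
proof -
  have "integral {a..b} (\<lambda>y. \<bar>x - y\<bar>) = integral {a..b} (\<lambda>y. x - y)"
    by (rule integral_cong) (use assms in auto)
  also have "\<dots> = (x*b - b\<^sup>2/2) - (x*a - a\<^sup>2/2)"
    by (rule ftc_real[OF assms(1)]) (auto intro!: derivative_eq_intros)
  finally show ?thesis by (simp add: field_simps)
qed

lemma int_abs_left:
  fixes x a b :: real
  assumes "a \<le> b" "x \<le> a"
  shows "integral {a..b} (\<lambda>y. \<bar>x - y\<bar>) = (b\<^sup>2-a\<^sup>2)/2 - x*(b-a)"
proof -
  have "integral {a..b} (\<lambda>y. \<bar>x - y\<bar>) = integral {a..b} (\<lambda>y. y - x)"
    by (rule integral_cong) (use assms in auto)
  also have "\<dots> = (b\<^sup>2/2 - x*b) - (a\<^sup>2/2 - x*a)"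
    by (rule ftc_real[OF assms(1)]) (auto intro!: derivative_eq_intros)
  finally show ?thesis by (simp add: field_simps)
qed

definition hU :: "real \<Rightarrow> real" where
  "hU x = (if \<bar>x\<bar> \<le> 1/2 then x\<^sup>2 + 1/4 else \<bar>x\<bar>)"

lemma hU_int: "integral {-1/2..1/2} (\<lambda>y. \<bar>x - y\<bar>) = hU x"
proof (cases "x \<ge> 1/2")
  case True
  have "integral {-1/2..1/2} (\<lambda>y. \<bar>x - y\<bar>) = x" by (subst int_abs_right) (use True in auto)
  moreover have "hU x = x"
  proof cases
    assume h: "x = 1/2" show ?thesis unfolding h hU_def by (simp add: power2_eq_square)
  next
    assume "x \<noteq> 1/2" then have "\<bar>x\<bar> > 1/2" "\<bar>x\<bar> = x" using True by auto
    then show ?thesis by (simp add: hU_def)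
  qed
  ultimately show ?thesis by simp
next
  case F1: False
  show ?thesis
  proof (cases "x \<le> -1/2")
    case True
    have "integral {-1/2..1/2} (\<lambda>y. \<bar>x - y\<bar>) = -x" by (subst int_abs_left) (use True in auto)
    moreover have "hU x = -x"
    proof cases
      assume h: "x = -1/2" show ?thesis unfolding h hU_def by (simp add: power2_eq_square)
    next
      assume "x \<noteq> -1/2" then have "\<bar>x\<bar> > 1/2" "\<bar>x\<bar> = -x" using True by auto
      then show ?thesis by (simp add: hU_def)
    qed
    ultimately show ?thesis by simp
  next
    case False
    have c: "(\<lambda>y. \<bar>x - y\<bar>) integrable_on {-1/2..1/2}"
      by (intro integrable_continuous_real continuous_intros)
    have "integral {-1/2..1/2} (\<lambda>y. \<bar>x - y\<bar>) = integral {-1/2..x} (\<lambda>y. \<bar>x - y\<bar>) + integral {x..1/2} (\<lambda>y. \<bar>x - y\<bar>)"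
      using Henstock_Kurzweil_Integration.integral_combine[where a="-1/2" and c=x and b="1/2", OF _ _ c] F1 False by auto
    also have "\<dots> = x\<^sup>2 + 1/4"
      using F1 False by (subst int_abs_right, simp, simp, subst int_abs_left, simp, simp)
         (simp add: power2_eq_square field_simps)
    moreover have "\<bar>x\<bar> \<le> 1/2" using F1 False by auto
    ultimately show ?thesis by (simp add: hU_def)
  qed
qed

lemma U_abs: "integrable U (\<lambda>y. \<bar>x - y\<bar>)" "(\<integral>y. \<bar>x - y\<bar> \<partial>U) = hU x"
proof -
  have c: "continuous_on {-1/2..1/2} (\<lambda>y. \<bar>x - y\<bar>)" by (intro continuous_intros)
  have m: "(\<lambda>y. \<bar>x - y\<bar>) \<in> borel_measurable borel" by measurable
  show "integrable U (\<lambda>y. \<bar>x - y\<bar>)" "(\<integral>y. \<bar>x - y\<bar> \<partial>U) = hU x"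
    using U_int[OF c m] hU_int[of x] by auto
qed

lemma hU_meas[measurable]: "hU \<in> borel_measurable borel"
  unfolding hU_def by measurable

lemma hU_le: "hU x \<le> x\<^sup>2 + 1/4"
proof -
  have e: "(\<bar>x\<bar> - 1/2)\<^sup>2 = x\<^sup>2 - \<bar>x\<bar> + 1/4"
    by (simp add: power2_eq_square algebra_simps abs_mult_self_eq)
  have "0 \<le> (\<bar>x\<bar> - 1/2)\<^sup>2" by simp
  then show ?thesis unfolding e hU_def by auto
qed

lemma hU_on: "\<bar>x\<bar> \<le> 1/2 \<Longrightarrow> hU x = x\<^sup>2 + 1/4" by (simp add: hU_def)

lemma U_sq: "integrable U (\<lambda>x. x\<^sup>2)" "(\<integral>x. x\<^sup>2 \<partial>U) = 1/12"
proof -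
  show "integrable U (\<lambda>x. x\<^sup>2)" by (rule U_int) (auto intro!: continuous_intros)
  have "(\<integral>x. x\<^sup>2 \<partial>U) = integral {-1/2..1/2} (\<lambda>x::real. x\<^sup>2)" by (rule U_int) (auto intro!: continuous_intros)
  also have "\<dots> = (1/2)^3/3 - (-1/2)^3/3"
    by (rule ftc_real) (auto intro!: derivative_eq_intros simp: power2_eq_square)
  also have "\<dots> = 1/12" by (simp add: power3_eq_cube)
  finally show "(\<integral>x. x\<^sup>2 \<partial>U) = 1/12" .
qed

lemma U_hU: "integrable U hU" "(\<integral>x. hU x \<partial>U) = 1/3"
proof -
  have e: "integral\<^sup>L U hU = integral\<^sup>L U (\<lambda>x. x\<^sup>2 + 1/4)"
    unfolding U_def
    by (rule integral_cong_AE) (auto simp: AE_density indicator_def hU_def intro!: AE_I2)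
  have "integrable U (\<lambda>x. x\<^sup>2 + 1/4)" by (rule U_int) (auto intro!: continuous_intros)
  then show "integrable U hU" unfolding U_def
    by (rule integrable_cong_AE_imp) (auto simp: AE_density indicator_def hU_def intro!: AE_I2)
  have "integral\<^sup>L U (\<lambda>x. x\<^sup>2 + 1/4) = 1/12 + 1/4"
  proof -
    interpret p: prob_space U by (rule prob_U)
    have "integral\<^sup>L U (\<lambda>x. x\<^sup>2 + 1/4) = integral\<^sup>L U (\<lambda>x. x\<^sup>2) + integral\<^sup>L U (\<lambda>x. 1/4)"
      using Bochner_Integration.integral_add[OF U_sq(1) p.integrable_const[of "1/4"]] by simp
    then show ?thesis using U_sq p.prob_space by simp
  qed
  then show "(\<integral>x. hU x \<partial>U) = 1/3" using e by simp
qed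

lemma abs_as_nn:
  fixes x y :: real
  shows "ennreal \<bar>x - y\<bar> = (\<integral>\<^sup>+u. ((if x \<le> u \<and> u < y then 1 else 0) + (if y \<le> u \<and> u < x then 1 else 0)) \<partial>lborel)"
proof -
  have "(\<integral>\<^sup>+u. ((if x \<le> u \<and> u < y then 1 else 0) + (if y \<le> u \<and> u < x then 1 else 0)) \<partial>lborel)
      = (\<integral>\<^sup>+u. (indicator {x..<y} u + indicator {y..<x} u) \<partial>lborel)"
    by (rule nn_integral_cong) (auto simp: indicator_def)
  also have "\<dots> = emeasure lborel {x..<y} + emeasure lborel {y..<x}"
    by (subst nn_integral_add) auto
  also have "\<dots> = ennreal \<bar>x - y\<bar>"
    by (cases "x \<le> y") auto
  finally show ?thesis by simp
qed

lemma abs_cdf: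
  fixes \<rho> \<rho>' :: "real measure"
  assumes p: "prob_space \<rho>" and s: "sets \<rho> = sets borel" and i: "integrable \<rho> (\<lambda>x. x)"
    and p': "prob_space \<rho>'" and s': "sets \<rho>' = sets borel" and i': "integrable \<rho>' (\<lambda>x. x)"
  shows "integrable \<rho> (\<lambda>x. \<integral>y. \<bar>x - y\<bar> \<partial>\<rho>')"
    "integrable lborel (\<lambda>u. measure \<rho> {..u} * (1 - measure \<rho>' {..u}) + measure \<rho>' {..u} * (1 - measure \<rho> {..u}))"
    "(\<integral>x. (\<integral>y. \<bar>x - y\<bar> \<partial>\<rho>') \<partial>\<rho>) =
       (\<integral>u. measure \<rho> {..u} * (1 - measure \<rho>' {..u}) + measure \<rho>' {..u} * (1 - measure \<rho> {..u}) \<partial>lborel)"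
proof -
  interpret P: prob_space \<rho> by (rule p)
  interpret P': prob_space \<rho>' by (rule p')
  note [measurable_cong] = s s'
  have sp[simp]: "space \<rho> = UNIV" "space \<rho>' = UNIV" using sets_eq_imp_space_eq[OF s] sets_eq_imp_space_eq[OF s'] by auto
  define F where "F u = measure \<rho> {..u}" for u
  define F' where "F' u = measure \<rho>' {..u}" for u
  define H where "H u = F u * (1 - F' u) + F' u * (1 - F u)" for u
  have monoF: "mono F" unfolding F_def mono_def by (auto intro!: P.finite_measure_mono simp: s)
  have monoF': "mono F'" unfolding F'_def mono_def by (auto intro!: P'.finite_measure_mono simp: s')
  have [measurable]: "F \<in> borel_measurable borel" "F' \<in> borel_measurable borel"
    using borel_measurable_mono monoF monoF' by auto
  have F01: "0 \<le> F u" "F u \<le> 1" for u unfolding F_def by auto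
  have F'01: "0 \<le> F' u" "F' u \<le> 1" for u unfolding F'_def by auto
  have emF: "emeasure \<rho> {..u} = ennreal (F u)" "emeasure \<rho> {u<..} = ennreal (1 - F u)" for u
  proof -
    show "emeasure \<rho> {..u} = ennreal (F u)" unfolding F_def by (simp add: P.emeasure_eq_measure)
    have "{u<..} = space \<rho> - {..u}" by auto
    then show "emeasure \<rho> {u<..} = ennreal (1 - F u)" unfolding F_def
      using P.prob_compl[of "{..u}"] by (simp add: P.emeasure_eq_measure s)
  qed
  have emF': "emeasure \<rho>' {..u} = ennreal (F' u)" "emeasure \<rho>' {u<..} = ennreal (1 - F' u)" for u
  proof -
    show "emeasure \<rho>' {..u} = ennreal (F' u)" unfolding F'_def by (simp add: P'.emeasure_eq_measure)
    have "{u<..} = space \<rho>' - {..u}" by auto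
    then show "emeasure \<rho>' {u<..} = ennreal (1 - F' u)" unfolding F'_def
      using P'.prob_compl[of "{..u}"] by (simp add: P'.emeasure_eq_measure s')
  qed
  define G where "G x u = (if x \<le> u then ennreal (1 - F' u) else 0) + (if u < x then ennreal (F' u) else 0)" for x u
  interpret PL': pair_sigma_finite \<rho>' lborel
    by (intro pair_sigma_finite.intro P'.sigma_finite_measure_axioms) (rule lborel.sigma_finite_measure_axioms)
  interpret PL: pair_sigma_finite \<rho> lborel
    by (intro pair_sigma_finite.intro P.sigma_finite_measure_axioms) (rule lborel.sigma_finite_measure_axioms)
  have stepa: "(\<integral>\<^sup>+y. ennreal \<bar>x - y\<bar> \<partial>\<rho>') = (\<integral>\<^sup>+u. G x u \<partial>lborel)" for x
  proof -
    define f where "f y u = ((if x \<le> u \<and> u < y then 1 else 0) + (if y \<le> u \<and> u < x then 1 else 0) :: ennreal)" for y u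
    have fm: "case_prod f \<in> borel_measurable (\<rho>' \<Otimes>\<^sub>M lborel)" unfolding f_def by measurable
    have "(\<integral>\<^sup>+y. ennreal \<bar>x - y\<bar> \<partial>\<rho>') = (\<integral>\<^sup>+y. (\<integral>\<^sup>+u. f y u \<partial>lborel) \<partial>\<rho>')"
      unfolding f_def using abs_as_nn by simp
    also have "\<dots> = (\<integral>\<^sup>+u. (\<integral>\<^sup>+y. f y u \<partial>\<rho>') \<partial>lborel)"
      by (rule PL'.Fubini'[OF fm, symmetric])
    also have "\<dots> = (\<integral>\<^sup>+u. G x u \<partial>lborel)"
    proof (rule nn_integral_cong)
      fix u
      have "(\<integral>\<^sup>+y. f y u \<partial>\<rho>') = (\<integral>\<^sup>+y. ((if x \<le> u then 1 else 0) * indicator {u<..} y + (if u < x then 1 else 0) * indicator {..u} y) \<partial>\<rho>')"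
        by (rule nn_integral_cong) (auto simp: f_def indicator_def)
      also have "\<dots> = (if x \<le> u then 1 else 0) * emeasure \<rho>' {u<..} + (if u < x then 1 else 0) * emeasure \<rho>' {..u}"
        by (subst nn_integral_add) (auto simp: nn_integral_cmult_indicator s')
      also have "\<dots> = G x u" unfolding G_def emF' by auto
      finally show "(\<integral>\<^sup>+y. f y u \<partial>\<rho>') = G x u" .
    qed
    finally show ?thesis .
  qed
  have Gm: "case_prod G \<in> borel_measurable (\<rho> \<Otimes>\<^sub>M lborel)" unfolding G_def by measurable
  have stepb: "(\<integral>\<^sup>+x. (\<integral>\<^sup>+u. G x u \<partial>lborel) \<partial>\<rho>) = (\<integral>\<^sup>+u. ennreal (H u) \<partial>lborel)"
  proof -
    have "(\<integral>\<^sup>+x. (\<integral>\<^sup>+u. G x u \<partial>lborel) \<partial>\<rho>) = (\<integral>\<^sup>+u. (\<integral>\<^sup>+x. G x u \<partial>\<rho>) \<partial>lborel)"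
      by (rule PL.Fubini'[OF Gm, symmetric])
    also have "\<dots> = (\<integral>\<^sup>+u. ennreal (H u) \<partial>lborel)"
    proof (rule nn_integral_cong)
      fix u
      have "(\<integral>\<^sup>+x. G x u \<partial>\<rho>) = (\<integral>\<^sup>+x. (ennreal (1 - F' u) * indicator {..u} x + ennreal (F' u) * indicator {u<..} x) \<partial>\<rho>)"
        by (rule nn_integral_cong) (auto simp: G_def indicator_def)
      also have "\<dots> = ennreal (1 - F' u) * emeasure \<rho> {..u} + ennreal (F' u) * emeasure \<rho> {u<..}"
        by (subst nn_integral_add) (auto simp: nn_integral_cmult_indicator s)
      also have "\<dots> = ennreal ((1 - F' u) * F u) + ennreal (F' u * (1 - F u))" unfolding emF
        using F01[of u] F'01[of u] by (simp add: ennreal_mult[symmetric])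
      also have "\<dots> = ennreal ((1 - F' u) * F u + F' u * (1 - F u))"
        using F01[of u] F'01[of u] by (intro ennreal_plus[symmetric]) auto
      also have "\<dots> = ennreal (H u)" unfolding H_def by (simp add: mult.commute)
      finally show "(\<integral>\<^sup>+x. G x u \<partial>\<rho>) = ennreal (H u)" .
    qed
    finally show ?thesis .
  qed
  have iabs: "integrable \<rho>' (\<lambda>y. \<bar>x - y\<bar>)" for x
    by (intro integrable_abs Bochner_Integration.integrable_diff P'.integrable_const i')
  have iabs0: "integrable \<rho> (\<lambda>y. \<bar>y\<bar>)" "integrable \<rho>' (\<lambda>y. \<bar>y\<bar>)" using i i' by (auto intro: integrable_abs)
  define \<phi> where "\<phi> x = (\<integral>y. \<bar>x - y\<bar> \<partial>\<rho>')" for x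
  have \<phi>nn: "0 \<le> \<phi> x" for x unfolding \<phi>_def by (rule integral_nonneg_AE) auto
  have \<phi>en: "ennreal (\<phi> x) = (\<integral>\<^sup>+y. ennreal \<bar>x - y\<bar> \<partial>\<rho>')" for x
    unfolding \<phi>_def by (rule nn_integral_eq_integral[OF iabs, symmetric]) auto
  have \<phi>m: "\<phi> \<in> borel_measurable \<rho>" unfolding \<phi>_def by measurable
  have \<phi>b: "\<phi> x \<le> \<bar>x\<bar> + (\<integral>y. \<bar>y\<bar> \<partial>\<rho>')" for x
  proof -
    have "\<phi> x \<le> (\<integral>y. \<bar>x\<bar> + \<bar>y\<bar> \<partial>\<rho>')" unfolding \<phi>_def
      by (rule integral_mono[OF iabs]) (auto intro: iabs0)
    also have "\<dots> = \<bar>x\<bar> + (\<integral>y. \<bar>y\<bar> \<partial>\<rho>')"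
      using Bochner_Integration.integral_add[OF P'.integrable_const[of "\<bar>x\<bar>"] iabs0(2)] P'.prob_space by simp
    finally show ?thesis .
  qed
  have i\<phi>: "integrable \<rho> \<phi>"
  proof (rule Bochner_Integration.integrable_bound[OF _ \<phi>m])
    show "integrable \<rho> (\<lambda>x. \<bar>x\<bar> + (\<integral>y. \<bar>y\<bar> \<partial>\<rho>'))"
      by (intro Bochner_Integration.integrable_add iabs0 P.integrable_const)
    show "AE x in \<rho>. norm (\<phi> x) \<le> norm (\<bar>x\<bar> + (\<integral>y. \<bar>y\<bar> \<partial>\<rho>'))"
      using \<phi>b \<phi>nn by (auto intro!: AE_I2)
  qed
  then show "integrable \<rho> (\<lambda>x. \<integral>y. \<bar>x - y\<bar> \<partial>\<rho>')" unfolding \<phi>_def .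
  have Hm[measurable]: "H \<in> borel_measurable lborel" unfolding H_def by measurable
  have Hnn: "0 \<le> H u" for u unfolding H_def using F01[of u] F'01[of u] by auto
  have key: "(\<integral>\<^sup>+u. ennreal (H u) \<partial>lborel) = ennreal (integral\<^sup>L \<rho> \<phi>)"
  proof -
    have "ennreal (integral\<^sup>L \<rho> \<phi>) = (\<integral>\<^sup>+x. ennreal (\<phi> x) \<partial>\<rho>)"
      by (rule nn_integral_eq_integral[OF i\<phi>, symmetric]) (auto simp: \<phi>nn)
    also have "\<dots> = (\<integral>\<^sup>+x. (\<integral>\<^sup>+u. G x u \<partial>lborel) \<partial>\<rho>)" using \<phi>en stepa by simp
    also have "\<dots> = (\<integral>\<^sup>+u. ennreal (H u) \<partial>lborel)" by (rule stepb)
    finally show ?thesis by simp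
  qed
  have iH: "integrable lborel H"
    by (rule integrableI_nn_integral_finite[OF Hm _ key]) (auto simp: Hnn)
  then show "integrable lborel (\<lambda>u. measure \<rho> {..u} * (1 - measure \<rho>' {..u}) + measure \<rho>' {..u} * (1 - measure \<rho> {..u}))"
    unfolding H_def F_def F'_def .
  have "integral\<^sup>L lborel H = enn2real (\<integral>\<^sup>+u. ennreal (H u) \<partial>lborel)"
    by (rule integral_eq_nn_integral) (auto simp: Hnn)
  also have "\<dots> = integral\<^sup>L \<rho> \<phi>" unfolding key
    using integral_nonneg_AE[of \<phi> \<rho>] \<phi>nn by simp
  finally show "(\<integral>x. (\<integral>y. \<bar>x - y\<bar> \<partial>\<rho>') \<partial>\<rho>) =
       (\<integral>u. measure \<rho> {..u} * (1 - measure \<rho>' {..u}) + measure \<rho>' {..u} * (1 - measure \<rho> {..u}) \<partial>lborel)"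
    unfolding H_def F_def F'_def \<phi>_def by simp
qed

lemma admissible_U: "admissible U"
  unfolding admissible_def using prob_U U_sq(1) by (auto simp: Vfun_def[abs_def])

lemma adm_moment:
  assumes "admissible \<nu>" shows "integrable \<nu> (\<lambda>x. x)"
proof -
  interpret P: prob_space \<nu> using assms by (simp add: admissible_def)
  have s: "sets \<nu> = sets borel" using assms by (simp add: admissible_def)
  have i2: "integrable \<nu> (\<lambda>x. x\<^sup>2)" using assms by (simp add: admissible_def Vfun_def[abs_def])
  show ?thesis
  proof (rule Bochner_Integration.integrable_bound[where f="\<lambda>x. x\<^sup>2 + 1"])
    show "integrable \<nu> (\<lambda>x. x\<^sup>2 + 1)" by (rule Bochner_Integration.integrable_add[OF i2 P.integrable_const])
    show "(\<lambda>x. x) \<in> borel_measurable \<nu>" unfolding measurable_cong_sets[OF s refl] by simp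
    have "\<bar>x\<bar> \<le> x\<^sup>2 + 1" for x :: real
    proof (cases "\<bar>x\<bar> \<le> 1")
      case True then show ?thesis using zero_le_power2[of x] by linarith
    next
      case False then have "\<bar>x\<bar> * 1 \<le> \<bar>x\<bar> * \<bar>x\<bar>" by (intro mult_left_mono) auto
      then show ?thesis by (simp add: abs_mult_self_eq power2_eq_square)
    qed
    then show "AE x in \<nu>. norm x \<le> norm (x\<^sup>2 + 1)" by (auto intro!: AE_I2)
  qed
qed

definition Fm :: "real measure \<Rightarrow> real \<Rightarrow> real" where "Fm \<rho> u = measure \<rho> {..u}"
definition Hm :: "real measure \<Rightarrow> real measure \<Rightarrow> real \<Rightarrow> real" where
  "Hm \<rho> \<rho>' u = Fm \<rho> u * (1 - Fm \<rho>' u) + Fm \<rho>' u * (1 - Fm \<rho> u)"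

lemma abs_cdf_adm:
  assumes "admissible \<rho>" "admissible \<rho>'"
  shows "integrable \<rho> (\<lambda>x. \<integral>y. \<bar>x - y\<bar> \<partial>\<rho>')" "integrable lborel (Hm \<rho> \<rho>')"
    "(\<integral>x. (\<integral>y. \<bar>x - y\<bar> \<partial>\<rho>') \<partial>\<rho>) = integral\<^sup>L lborel (Hm \<rho> \<rho>')"
proof -
  have p: "prob_space \<rho>" "sets \<rho> = sets borel" "prob_space \<rho>'" "sets \<rho>' = sets borel"
    using assms by (auto simp: admissible_def)
  note A = abs_cdf[OF p(1,2) adm_moment[OF assms(1)] p(3,4) adm_moment[OF assms(2)]]
  have e: "Hm \<rho> \<rho>' = (\<lambda>u. measure \<rho> {..u} * (1 - measure \<rho>' {..u}) + measure \<rho>' {..u} * (1 - measure \<rho> {..u}))"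
    unfolding Hm_def[abs_def] Fm_def ..
  show "integrable \<rho> (\<lambda>x. \<integral>y. \<bar>x - y\<bar> \<partial>\<rho>')" "integrable lborel (Hm \<rho> \<rho>')"
    "(\<integral>x. (\<integral>y. \<bar>x - y\<bar> \<partial>\<rho>') \<partial>\<rho>) = integral\<^sup>L lborel (Hm \<rho> \<rho>')"
    unfolding e by (rule A(1), rule A(2), rule A(3))
qed

lemma energy_alt: "energy \<nu> = (\<integral>x. x\<^sup>2 \<partial>\<nu>) - 1/2 * (\<integral>x. (\<integral>y. \<bar>x - y\<bar> \<partial>\<nu>) \<partial>\<nu>)"
  unfolding energy_def gfun_def Vfun_def by simp

lemma UU: "(\<integral>x. (\<integral>y. \<bar>x - y\<bar> \<partial>U) \<partial>U) = 1/3"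
  using U_abs(2) U_hU(2) by simp

lemma energy_U: "energy U = -1/12"
  unfolding energy_alt UU U_sq(2) by simp

lemma energy_ge:
  assumes adm: "admissible \<nu>"
  shows "integrable lborel (\<lambda>u. (Fm \<nu> u - Fm U u)\<^sup>2)"
    "energy \<nu> \<ge> -1/12 + (\<integral>u. (Fm \<nu> u - Fm U u)\<^sup>2 \<partial>lborel)"
proof -
  interpret P: prob_space \<nu> using adm by (simp add: admissible_def)
  have s: "sets \<nu> = sets borel" using adm by (simp add: admissible_def)
  have i2: "integrable \<nu> (\<lambda>x. x\<^sup>2)" using adm by (simp add: admissible_def Vfun_def[abs_def])
  note A1 = abs_cdf_adm[OF adm adm]
  note A2 = abs_cdf_adm[OF adm admissible_U]
  note A3 = abs_cdf_adm[OF admissible_U admissible_U]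
  have e: "(\<lambda>u. (Fm \<nu> u - Fm U u)\<^sup>2) = (\<lambda>u. (2 * Hm \<nu> U u - Hm \<nu> \<nu> u - Hm U U u) / 2)"
    by (rule ext) (simp add: Hm_def power2_eq_square algebra_simps)
  have i3: "integrable lborel (\<lambda>u. 2 * Hm \<nu> U u - Hm \<nu> \<nu> u - Hm U U u)"
    by (intro Bochner_Integration.integrable_diff integrable_mult_right A1(2) A2(2) A3(2))
  show "integrable lborel (\<lambda>u. (Fm \<nu> u - Fm U u)\<^sup>2)" unfolding e by (intro integrable_divide_zero i3)
  define a where "a = (\<integral>x. x\<^sup>2 \<partial>\<nu>)"
  define b where "b = integral\<^sup>L lborel (Hm \<nu> \<nu>)"
  define c where "c = integral\<^sup>L lborel (Hm \<nu> U)"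
  define D where "D = (\<integral>u. (Fm \<nu> u - Fm U u)\<^sup>2 \<partial>lborel)"
  have d: "integral\<^sup>L lborel (Hm U U) = 1/3" using A3(3) UU by simp
  have "D = integral\<^sup>L lborel (\<lambda>u. 2 * Hm \<nu> U u - Hm \<nu> \<nu> u - Hm U U u) / 2"
    unfolding D_def e by (rule integral_divide_zero)
  also have "integral\<^sup>L lborel (\<lambda>u. 2 * Hm \<nu> U u - Hm \<nu> \<nu> u - Hm U U u)
      = integral\<^sup>L lborel (\<lambda>u. 2 * Hm \<nu> U u - Hm \<nu> \<nu> u) - integral\<^sup>L lborel (Hm U U)"
    using A1(2) A2(2) A3(2) by (intro Bochner_Integration.integral_diff) auto
  also have "integral\<^sup>L lborel (\<lambda>u. 2 * Hm \<nu> U u - Hm \<nu> \<nu> u) = 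
      integral\<^sup>L lborel (\<lambda>u. 2 * Hm \<nu> U u) - integral\<^sup>L lborel (Hm \<nu> \<nu>)"
    using A1(2) A2(2) by (intro Bochner_Integration.integral_diff) auto
  also have "integral\<^sup>L lborel (\<lambda>u. 2 * Hm \<nu> U u) = 2 * c"
    unfolding c_def by (rule integral_mult_right_zero)
  finally have Deq: "D = (2 * c - b - 1/3) / 2" unfolding b_def d .
  have hc: "c = (\<integral>x. hU x \<partial>\<nu>)" unfolding c_def A2(3)[symmetric] using U_abs(2) by simp
  have ihU: "integrable \<nu> hU" using A2(1) U_abs(2) by simp
  have "(\<integral>x. x\<^sup>2 - hU x \<partial>\<nu>) \<ge> (\<integral>x. -1/4 \<partial>\<nu>)"
  proof (rule integral_mono)
    show "integrable \<nu> (\<lambda>x. - 1 / 4)" by simp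
    show "integrable \<nu> (\<lambda>x. x\<^sup>2 - hU x)" by (intro Bochner_Integration.integrable_diff i2 ihU)
    fix x show "- 1 / 4 \<le> x\<^sup>2 - hU x" using hU_le[of x] by linarith
  qed
  moreover have "(\<integral>x. x\<^sup>2 - hU x \<partial>\<nu>) = a - c" unfolding a_def hc
    by (rule Bochner_Integration.integral_diff[OF i2 ihU])
  moreover have "(\<integral>x. -1/4 \<partial>\<nu>) = (-1/4::real)" using P.prob_space by simp
  ultimately have "a - c \<ge> -1/4" by simp
  moreover have "energy \<nu> = a - b/2" unfolding energy_alt a_def b_def A1(3) by simp
  ultimately show "energy \<nu> \<ge> -1/12 + (\<integral>u. (Fm \<nu> u - Fm U u)\<^sup>2 \<partial>lborel)"
  proof -
    have "D = c - b/2 - 1/6" using Deq by (simp add: field_simps)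
    then show ?thesis using \<open>a - c \<ge> -1/4\<close> \<open>energy \<nu> = a - b/2\<close> unfolding D_def by linarith
  qed
qed

lemma rd_adm: "admissible \<nu> \<Longrightarrow> real_distribution \<nu>"
  unfolding real_distribution_def real_distribution_axioms_def admissible_def by auto

lemma D_zero_imp:
  assumes adm: "admissible \<nu>" and D0: "(\<integral>u. (Fm \<nu> u - Fm U u)\<^sup>2 \<partial>lborel) = 0"
  shows "\<nu> = U"
proof -
  define g where "g s = Fm \<nu> s - Fm U s" for s
  have AE: "AE u in lborel. (g u)\<^sup>2 = 0"
    using integral_nonneg_eq_0_iff_AE[of lborel "\<lambda>u. (Fm \<nu> u - Fm U u)\<^sup>2"] energy_ge(1)[OF adm] D0
    unfolding g_def by auto
  have rd1: "real_distribution \<nu>" by (rule rd_adm[OF adm])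
  have rd2: "real_distribution U" by (rule rd_adm[OF admissible_U])
  have "g u = 0" for u
  proof (rule ccontr)
    assume ne: "g u \<noteq> 0"
    have c1: "continuous (at_right u) (Fm \<nu>)"
      using finite_borel_measure.cdf_is_right_cont[OF real_distribution.finite_borel_measure_M[OF rd1]]
      unfolding cdf_def2[abs_def] Fm_def[abs_def] .
    have c2: "continuous (at_right u) (Fm U)"
      using finite_borel_measure.cdf_is_right_cont[OF real_distribution.finite_borel_measure_M[OF rd2]]
      unfolding cdf_def2[abs_def] Fm_def[abs_def] .
    have "continuous (at_right u) g" unfolding g_def[abs_def] using c1 c2 by (intro continuous_diff)
    then have "(g \<longlongrightarrow> g u) (at_right u)" by (simp add: continuous_within)
    then have "\<forall>\<^sub>F s in at_right u. dist (g s) (g u) < \<bar>g u\<bar>"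
      using ne by (intro tendstoD) auto
    then obtain b where b: "b > u" "\<And>s. u < s \<Longrightarrow> s < b \<Longrightarrow> dist (g s) (g u) < \<bar>g u\<bar>"
      unfolding eventually_at_right_field by auto
    have sub: "{u<..<b} \<subseteq> {x \<in> space lborel. \<not> (g x)\<^sup>2 = 0}"
    proof
      fix s assume "s \<in> {u<..<b}"
      then have "dist (g s) (g u) < \<bar>g u\<bar>" using b by auto
      then have "g s \<noteq> 0" by (auto simp: dist_real_def)
      then show "s \<in> {x \<in> space lborel. \<not> (g x)\<^sup>2 = 0}" by auto
    qed
    from AE obtain N where N: "{x \<in> space lborel. \<not> (g x)\<^sup>2 = 0} \<subseteq> N" "emeasure lborel N = 0" "N \<in> sets lborel"
      by (rule AE_E)
    have "emeasure lborel {u<..<b} \<le> emeasure lborel N"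
      using sub N by (intro emeasure_mono) auto
    then show False using N(2) b(1) by simp
  qed
  then have "cdf \<nu> = cdf U" unfolding g_def Fm_def by (auto simp: cdf_def2)
  then show ?thesis by (rule cdf_unique[OF rd1 rd2])
qed

lemma equilibrium_is_U: "equilibrium_measure = U"
  unfolding equilibrium_measure_def
proof (rule the_equality)
  show "admissible U \<and> (\<forall>\<nu>. admissible \<nu> \<longrightarrow> energy U \<le> energy \<nu>)"
  proof (intro conjI allI impI admissible_U)
    fix \<nu> assume a: "admissible \<nu>"
    have "0 \<le> (\<integral>u. (Fm \<nu> u - Fm U u)\<^sup>2 \<partial>lborel)" by (rule integral_nonneg_AE) auto
    then show "energy U \<le> energy \<nu>" using energy_ge(2)[OF a] energy_U by linarith
  qed
next
  fix \<mu> assume h: "admissible \<mu> \<and> (\<forall>\<nu>. admissible \<nu> \<longrightarrow> energy \<mu> \<le> energy \<nu>)"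
  then have a: "admissible \<mu>" and le: "energy \<mu> \<le> energy U" using admissible_U by auto
  have "0 \<le> (\<integral>u. (Fm \<mu> u - Fm U u)\<^sup>2 \<partial>lborel)" by (rule integral_nonneg_AE) auto
  then have "(\<integral>u. (Fm \<mu> u - Fm U u)\<^sup>2 \<partial>lborel) = 0" using energy_ge(2)[OF a] energy_U le by linarith
  then show "\<mu> = U" by (rule D_zero_imp[OF a])
qed

definition X0 :: "nat \<Rightarrow> nat \<Rightarrow> real" where "X0 N i = (real i + 1) / real N - 1/2"

lemma sum_id: "(\<Sum>i<N. real i) = real N * (real N - 1) / 2"
  by (induction N) (auto simp: field_simps)

lemma sum_lin1: "(\<Sum>i<N. real i + 1) = real N * (real N + 1) / 2"
  by (induction N) (auto simp: field_simps)

lemma sum_sq1: "(\<Sum>i<N. (real i + 1)\<^sup>2) = real N * (real N + 1) * (2 * real N + 1) / 6"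
  by (induction N) (auto simp: field_simps power2_eq_square)

lemma sum_absN: "(\<Sum>i<N. \<bar>real i - real N\<bar>) = real N * (real N + 1) / 2"
proof -
  have "(\<Sum>i<N. \<bar>real i - real N\<bar>) = (\<Sum>i<N. real N - real i)" by (rule sum.cong) auto
  also have "\<dots> = real N * real N - (\<Sum>i<N. real i)" by (simp add: sum_subtractf)
  finally show ?thesis unfolding sum_id by (simp add: field_simps)
qed

lemma sum_absN': "(\<Sum>j<N. \<bar>real N - real j\<bar>) = real N * (real N + 1) / 2"
  using sum_absN[of N] by (simp add: abs_minus_commute)

lemma sum_T: "(\<Sum>i<N. \<Sum>j<N. \<bar>real i - real j\<bar>) = ((real N)^3 - real N) / 3"
proof (induction N)
  case 0 then show ?case by simp
next
  case (Suc N)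
  have "(\<Sum>i<Suc N. \<Sum>j<Suc N. \<bar>real i - real j\<bar>)
     = (\<Sum>i<N. \<Sum>j<N. \<bar>real i - real j\<bar>) + (\<Sum>i<N. \<bar>real i - real N\<bar>) + (\<Sum>j<N. \<bar>real N - real j\<bar>)"
    by (simp add: sum.distrib)
  also have "\<dots> = ((real N)^3 - real N) / 3 + real N * (real N + 1)"
    unfolding Suc.IH sum_absN sum_absN' by simp
  also have "\<dots> = ((real (Suc N))^3 - real (Suc N)) / 3"
    by (simp add: field_simps power3_eq_cube)
  finally show ?case .
qed

lemma X0_abs: "N \<ge> 1 \<Longrightarrow> i < N \<Longrightarrow> \<bar>X0 N i\<bar> \<le> 1/2"
  unfolding X0_def by (auto simp: field_simps)

lemma modulated_U:
  assumes N: "N \<ge> 1"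
  shows "modulated_energy N (X0 N) U = 1 / (3 * (real N)\<^sup>2)"
proof -
  have Npos: "real N > 0" using N by simp
  have g1: "(\<Sum>j\<in>{..<N} - {i}. gfun (X0 N i - X0 N j)) = - (\<Sum>j<N. \<bar>real i - real j\<bar>) / real N" if "i < N" for i
  proof -
    have "(\<Sum>j\<in>{..<N} - {i}. gfun (X0 N i - X0 N j)) = (\<Sum>j<N. gfun (X0 N i - X0 N j))"
      using that by (simp add: sum_diff1 gfun_def)
    also have "\<dots> = (\<Sum>j<N. - \<bar>real i - real j\<bar> / real N)"
    proof (rule sum.cong)
      fix j
      have "X0 N i - X0 N j = (real i - real j) / real N" unfolding X0_def using Npos by (simp add: field_simps)
      then show "gfun (X0 N i - X0 N j) = - \<bar>real i - real j\<bar> / real N"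
        using Npos by (simp add: gfun_def abs_divide)
    qed simp
    finally show ?thesis by (simp add: sum_negf sum_divide_distrib)
  qed
  have S1: "(\<Sum>i<N. \<Sum>j\<in>{..<N} - {i}. gfun (X0 N i - X0 N j)) = - (((real N)^3 - real N) / 3) / real N"
  proof -
    have "(\<Sum>i<N. \<Sum>j\<in>{..<N} - {i}. gfun (X0 N i - X0 N j)) = (\<Sum>i<N. - (\<Sum>j<N. \<bar>real i - real j\<bar>) / real N)"
      using g1 by (intro sum.cong) auto
    also have "\<dots> = - (\<Sum>i<N. \<Sum>j<N. \<bar>real i - real j\<bar>) / real N"
      by (simp add: sum_negf sum_divide_distrib[symmetric])
    finally show ?thesis unfolding sum_T .
  qed
  have g2: "(\<integral>y. gfun (X0 N i - y) \<partial>U) = - ((X0 N i)\<^sup>2 + 1/4)" if "i < N" for i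
    using U_abs(2)[of "X0 N i"] hU_on[OF X0_abs[OF N that]] by (simp add: gfun_def)
  have S2: "(\<Sum>i<N. \<integral>y. gfun (X0 N i - y) \<partial>U) = - (\<Sum>i<N. (X0 N i)\<^sup>2 + 1/4)"
  proof -
    have "(\<Sum>i<N. \<integral>y. gfun (X0 N i - y) \<partial>U) = (\<Sum>i<N. - ((X0 N i)\<^sup>2 + 1/4))"
      using g2 by (intro sum.cong) auto
    then show ?thesis by (simp only: sum_negf)
  qed
  have X2: "(X0 N i)\<^sup>2 + 1/4 = (real i + 1)\<^sup>2 / (real N)\<^sup>2 - (real i + 1) / real N + 1/2" for i
    unfolding X0_def using Npos by (simp add: field_simps power2_eq_square)
  have S2': "(\<Sum>i<N. (X0 N i)\<^sup>2 + 1/4) = (real N * (real N + 1) * (2 * real N + 1) / 6) / (real N)\<^sup>2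
       - (real N * (real N + 1) / 2) / real N + real N / 2"
  proof -
    have "(\<Sum>i<N. (X0 N i)\<^sup>2 + 1/4) = (\<Sum>i<N. (real i + 1)\<^sup>2) / (real N)\<^sup>2 - (\<Sum>i<N. real i + 1) / real N + (\<Sum>i<N. 1/2)"
      unfolding X2 by (simp only: sum.distrib sum_subtractf sum_divide_distrib[symmetric])
    then show ?thesis unfolding sum_sq1 sum_lin1 by simp
  qed
  have S3: "(\<integral>x. (\<integral>y. gfun (x - y) \<partial>U) \<partial>U) = - 1/3"
    using UU by (simp add: gfun_def)
  show ?thesis
    unfolding modulated_energy_def S1 S2 S2' S3 using Npos
    by (simp add: field_simps power2_eq_square power3_eq_cube)
qed

lemma modulated_lim: "(\<lambda>N. modulated_energy N (X0 N) U) \<longlonglongrightarrow> 0"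
proof -
  have "(\<lambda>N. (1/3) * (inverse (real N) * inverse (real N))) \<longlonglongrightarrow> (1/3) * (0 * 0)"
    by (intro tendsto_mult tendsto_const lim_inverse_n)
  then have l: "(\<lambda>N. (1/3) * (inverse (real N) * inverse (real N))) \<longlonglongrightarrow> 0" by simp
  show ?thesis
  proof (rule Lim_transform_eventually[OF l])
    show "\<forall>\<^sub>F N in sequentially. 1/3 * (inverse (real N) * inverse (real N)) = modulated_energy N (X0 N) U"
      unfolding eventually_sequentially
      by (rule exI[of _ 1]) (auto simp: modulated_U field_simps power2_eq_square)
  qed
qed

lemma riemann:
  fixes \<phi> :: "real \<Rightarrow> real"
  assumes cont: "continuous_on {-1/2..1/2} \<phi>"
  shows "(\<lambda>N. (1/real N) * (\<Sum>i<N. \<phi> (X0 N i))) \<longlonglongrightarrow> integral {-1/2..1/2} \<phi>"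
  unfolding lim_sequentially
proof (intro allI impI)
  fix r :: real assume r: "r > 0"
  have uc: "uniformly_continuous_on {-1/2..1/2} \<phi>"
    by (rule compact_uniformly_continuous[OF cont compact_Icc])
  obtain d where d: "d > 0" "\<And>x x'. x \<in> {-1/2..1/2} \<Longrightarrow> x' \<in> {-1/2..1/2} \<Longrightarrow> dist x' x < d \<Longrightarrow> dist (\<phi> x') (\<phi> x) < r/2"
    using uc r unfolding uniformly_continuous_on_def by (metis half_gt_zero)
  obtain n0 :: nat where n0: "n0 > 0" "inverse (real n0) < d" using ex_inverse_of_nat_less[OF d(1)] by auto
  show "\<exists>no. \<forall>N\<ge>no. dist ((1/real N) * (\<Sum>i<N. \<phi> (X0 N i))) (integral {-1/2..1/2} \<phi>) < r"
  proof (intro exI allI impI)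
    fix N assume N: "n0 \<le> N"
    have Npos: "real N > 0" using N n0 by simp
    have invN: "1 / real N < d"
    proof -
      have "1 / real N \<le> inverse (real n0)" using N n0 by (simp add: field_simps)
      then show ?thesis using n0 by simp
    qed
    define a where "a k = real k / real N - 1/2" for k
    have a_mono: "a i \<le> a j" if "i \<le> j" for i j unfolding a_def using that Npos by (simp add: divide_right_mono)
    have a0: "a 0 = -1/2" and aN: "a N = 1/2" unfolding a_def using Npos by auto
    have aS: "a k \<in> {-1/2..1/2}" if "k \<le> N" for k
      using a_mono[of 0 k] a_mono[of k N] that a0 aN by auto
    have aSuc: "a (Suc i) - a i = 1 / real N" for i unfolding a_def by (simp add: diff_divide_distrib[symmetric])
    have X0a: "X0 N i = a (Suc i)" for i unfolding X0_def a_def of_nat_Suc by (simp only: add.commute)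
    have sub: "{a i..a j} \<subseteq> {-1/2..1/2}" if "j \<le> N" for i j
      using aS[of j] a_mono[of 0 i] a0 that by auto
    have intg: "\<phi> integrable_on {a i..a j}" if "j \<le> N" for i j
      by (rule integrable_continuous_real, rule continuous_on_subset[OF cont sub[OF that]])
    have comb: "integral {a 0..a m} \<phi> = (\<Sum>i<m. integral {a i..a (Suc i)} \<phi>)" if "m \<le> N" for m
      using that
    proof (induction m)
      case 0 then show ?case by simp
    next
      case (Suc m)
      have "integral {a 0..a (Suc m)} \<phi> = integral {a 0..a m} \<phi> + integral {a m..a (Suc m)} \<phi>"
        using Henstock_Kurzweil_Integration.integral_combine[where a="a 0" and c="a m" and b="a (Suc m)", OF _ _ intg[OF Suc.prems]]
          a_mono[of 0 m] a_mono[of m "Suc m"] by auto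
      then show ?case using Suc by simp
    qed
    have cell: "\<bar>\<phi> (a (Suc i)) / real N - integral {a i..a (Suc i)} \<phi>\<bar> \<le> (r/2) / real N" if "i < N" for i
    proof -
      have le: "a i \<le> a (Suc i)" by (rule a_mono) simp
      have ci: "continuous_on {a i..a (Suc i)} \<phi>" by (rule continuous_on_subset[OF cont sub]) (use that in simp)
      have "integral {a i..a (Suc i)} (\<lambda>x. \<phi> (a (Suc i)) - \<phi> x) = \<phi> (a (Suc i)) * (a (Suc i) - a i) - integral {a i..a (Suc i)} \<phi>"
        using le by (subst integral_diff) (auto intro!: integrable_continuous_real ci simp: content_real)
      also have "\<dots> = \<phi> (a (Suc i)) / real N - integral {a i..a (Suc i)} \<phi>" unfolding aSuc by simp
      finally have e: "integral {a i..a (Suc i)} (\<lambda>x. \<phi> (a (Suc i)) - \<phi> x) = \<phi> (a (Suc i)) / real N - integral {a i..a (Suc i)} \<phi>" .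
      have "norm (integral {a i..a (Suc i)} (\<lambda>x. \<phi> (a (Suc i)) - \<phi> x)) \<le> (r/2) * (a (Suc i) - a i)"
      proof (rule integral_bound[OF le])
        show "continuous_on {a i..a (Suc i)} (\<lambda>x. \<phi> (a (Suc i)) - \<phi> x)" by (intro continuous_intros ci)
        fix t assume t: "t \<in> {a i..a (Suc i)}"
        have tS: "t \<in> {-1/2..1/2}" using sub[of "Suc i" i] that t by auto
        have "dist t (a (Suc i)) \<le> 1 / real N" using t aSuc[of i] by (auto simp: dist_real_def)
        then have "dist t (a (Suc i)) < d" using invN by linarith
        then have "dist (\<phi> t) (\<phi> (a (Suc i))) < r/2" using d(2)[OF aS[of "Suc i"] tS] that by auto
        then show "norm (\<phi> (a (Suc i)) - \<phi> t) \<le> r/2" by (simp add: dist_real_def abs_minus_commute)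
      qed
      then show ?thesis unfolding e aSuc by simp
    qed
    have "(1/real N) * (\<Sum>i<N. \<phi> (X0 N i)) - integral {-1/2..1/2} \<phi>
        = (\<Sum>i<N. \<phi> (a (Suc i)) / real N - integral {a i..a (Suc i)} \<phi>)"
    proof -
      have whole: "integral {-1/2..1/2} \<phi> = (\<Sum>i<N. integral {a i..a (Suc i)} \<phi>)"
        using comb[OF order_refl] a0 aN by simp
      show ?thesis unfolding X0a whole
        by (simp add: sum_subtractf sum_divide_distrib)
    qed
    then have "\<bar>(1/real N) * (\<Sum>i<N. \<phi> (X0 N i)) - integral {-1/2..1/2} \<phi>\<bar>
        \<le> (\<Sum>i<N. \<bar>\<phi> (a (Suc i)) / real N - integral {a i..a (Suc i)} \<phi>\<bar>)"
      by (simp add: sum_abs)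
    also have "\<dots> \<le> (\<Sum>i<N. (r/2) / real N)" by (rule sum_mono) (use cell in auto)
    also have "\<dots> = r/2" using Npos by simp
    finally show "dist ((1/real N) * (\<Sum>i<N. \<phi> (X0 N i))) (integral {-1/2..1/2} \<phi>) < r"
      using r by (simp add: dist_real_def)
  qed
qed

lemma gder_eq: "gder s = - sgn s"
proof (cases "s = 0")
  case True then show ?thesis by (simp add: gder_def)
next
  case False
  show ?thesis
  proof (cases "s > 0")
    case True
    have "((\<lambda>x. - x) has_real_derivative -1) (at s)" by (auto intro!: derivative_eq_intros)
    then have "(gfun has_real_derivative -1) (at s)"
      by (rule has_field_derivative_transform_within_open[where S="{0<..}"]) (use True in \<open>auto simp: gfun_def\<close>)
    then show ?thesis using True by (simp add: gder_def DERIV_imp_deriv)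
  next
    case F2: False
    then have neg: "s < 0" using False by simp
    have "((\<lambda>x. x) has_real_derivative 1) (at s)" by (auto intro!: derivative_eq_intros)
    then have "(gfun has_real_derivative 1) (at s)"
      by (rule has_field_derivative_transform_within_open[where S="{..<0}"]) (use neg in \<open>auto simp: gfun_def\<close>)
    then show ?thesis using neg by (simp add: gder_def DERIV_imp_deriv)
  qed
qed

lemma dV: "deriv Vfun s = 2 * s"
proof -
  have "(Vfun has_real_derivative 2 * s) (at s)" unfolding Vfun_def[abs_def]
    by (auto intro!: derivative_eq_intros)
  then show ?thesis by (rule DERIV_imp_deriv)
qed

lemma uniq:
  fixes x1 v1 x2 v2 :: "real \<Rightarrow> nat \<Rightarrow> real"
  assumes eps: "\<epsilon> > 0" and sol1: "is_solution \<epsilon> N X x1 v1" and sol2: "is_solution \<epsilon> N X x2 v2"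
    and r: "r > 0" and sep: "\<And>t i j. t \<ge> 0 \<Longrightarrow> i < N \<Longrightarrow> j < N \<Longrightarrow> i \<noteq> j \<Longrightarrow> \<bar>x1 t i - x1 t j\<bar> \<ge> r"
  shows "\<And>t i. t \<ge> 0 \<Longrightarrow> i < N \<Longrightarrow> x2 t i = x1 t i \<and> v2 t i = v1 t i"
proof -
  define F where "F y i = - (1 / (\<epsilon>\<^sup>2 * real N)) * (\<Sum>j\<in>{..<N} - {i}. gder (y i - y j)) - (1 / \<epsilon>\<^sup>2) * deriv Vfun (y i)" for y :: "nat \<Rightarrow> real" and i
  have init1: "x1 0 i = X i" "v1 0 i = 0" if "i < N" for i using sol1 that unfolding is_solution_def by auto
  have init2: "x2 0 i = X i" "v2 0 i = 0" if "i < N" for i using sol2 that unfolding is_solution_def by auto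
  have dx1: "((\<lambda>s. x1 s i) has_real_derivative v1 t i) (at t within {0..})"
    and dv1: "((\<lambda>s. v1 s i) has_real_derivative F (x1 t) i) (at t within {0..})" if "t \<ge> 0" "i < N" for t i
    using sol1 that unfolding is_solution_def F_def by auto
  have dx2: "((\<lambda>s. x2 s i) has_real_derivative v2 t i) (at t within {0..})"
    and dv2: "((\<lambda>s. v2 s i) has_real_derivative F (x2 t) i) (at t within {0..})" if "t \<ge> 0" "i < N" for t i
    using sol2 that unfolding is_solution_def F_def by auto
  define z where "z t i = x2 t i - x1 t i" for t i
  define q where "q t i = v2 t i - v1 t i" for t i
  define good where "good t \<longleftrightarrow> (\<forall>i<N. \<bar>z t i\<bar> < r/2)" for t
  have dz: "((\<lambda>s. z s i) has_real_derivative q t i) (at t within {0..})" if "t \<ge> 0" "i < N" for t i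
    unfolding z_def q_def using dx1[OF that] dx2[OF that] by (rule DERIV_diff[rotated])
  have Fdiff: "F (x2 t) i - F (x1 t) i = - (2 / \<epsilon>\<^sup>2) * z t i" if "t \<ge> 0" "good t" "i < N" for t i
  proof -
    have "(\<Sum>j\<in>{..<N} - {i}. gder (x2 t i - x2 t j)) = (\<Sum>j\<in>{..<N} - {i}. gder (x1 t i - x1 t j))"
    proof (rule sum.cong)
      fix j assume j: "j \<in> {..<N} - {i}"
      then have jN: "j < N" and ij: "i \<noteq> j" by auto
      have s1: "\<bar>x1 t i - x1 t j\<bar> \<ge> r" by (rule sep[OF that(1) that(3) jN ij])
      have zi: "\<bar>z t i\<bar> < r/2" and zj: "\<bar>z t j\<bar> < r/2" using that(2) that(3) jN unfolding good_def by auto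
      have e: "x2 t i - x2 t j = (x1 t i - x1 t j) + (z t i - z t j)" unfolding z_def by simp
      have "sgn (x2 t i - x2 t j) = sgn (x1 t i - x1 t j)"
      proof (cases "x1 t i - x1 t j > 0")
        case True
        then have "x1 t i - x1 t j \<ge> r" using s1 by auto
        then have "x2 t i - x2 t j > 0" using e zi zj by linarith
        then show ?thesis using True by simp
      next
        case False
        then have "x1 t i - x1 t j \<le> - r" using s1 by auto
        then have "x2 t i - x2 t j < 0" using e zi zj by linarith
        then show ?thesis using False \<open>x1 t i - x1 t j \<le> - r\<close> r by simp
      qed
      then show "gder (x2 t i - x2 t j) = gder (x1 t i - x1 t j)" by (simp add: gder_eq)
    qed simp
    then show ?thesis unfolding F_def dV z_def using eps by (simp add: field_simps)
  qed
  have dq: "((\<lambda>s. q s i) has_real_derivative - (2 / \<epsilon>\<^sup>2) * z t i) (at t within {0..})"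
    if "t \<ge> 0" "good t" "i < N" for t i
    unfolding q_def Fdiff[OF that, symmetric] using dv1[OF that(1,3)] dv2[OF that(1,3)] by (rule DERIV_diff[rotated])
  define E where "E t = (\<Sum>i<N. (q t i)\<^sup>2) + (2 / \<epsilon>\<^sup>2) * (\<Sum>i<N. (z t i)\<^sup>2)" for t
  have dE: "(E has_real_derivative 0) (at t within {0..})" if "t \<ge> 0" "good t" for t
  proof -
    have "(E has_real_derivative (\<Sum>i<N. 2 * q t i * (- (2 / \<epsilon>\<^sup>2) * z t i)) + (2 / \<epsilon>\<^sup>2) * (\<Sum>i<N. 2 * z t i * q t i)) (at t within {0..})"
      unfolding E_def
      by (intro DERIV_add DERIV_cmult DERIV_sum)
         (auto intro!: derivative_eq_intros dq[OF that] dz[OF that(1)] simp: power2_eq_square)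
    moreover have "(\<Sum>i<N. 2 * q t i * (- (2 / \<epsilon>\<^sup>2) * z t i)) + (2 / \<epsilon>\<^sup>2) * (\<Sum>i<N. 2 * z t i * q t i) = 0"
      by (simp add: sum_distrib_left sum_negf algebra_simps)
    ultimately show ?thesis by simp
  qed
  have cz: "continuous_on {0..} (\<lambda>s. z s i)" if "i < N" for i
    unfolding continuous_on_eq_continuous_within
  proof
    fix t :: real assume "t \<in> {0..}"
    then show "continuous (at t within {0..}) (\<lambda>s. z s i)" by (intro DERIV_continuous[OF dz]) (use that in auto)
  qed
  have cq: "continuous_on {0..} (\<lambda>s. q s i)" if "i < N" for i
  proof -
    have "continuous_on {0..} (\<lambda>s. v1 s i)"
      unfolding continuous_on_eq_continuous_within
    proof
      fix t :: real assume "t \<in> {0..}"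
      then show "continuous (at t within {0..}) (\<lambda>s. v1 s i)" by (intro DERIV_continuous[OF dv1]) (use that in auto)
    qed
    moreover have "continuous_on {0..} (\<lambda>s. v2 s i)"
      unfolding continuous_on_eq_continuous_within
    proof
      fix t :: real assume "t \<in> {0..}"
      then show "continuous (at t within {0..}) (\<lambda>s. v2 s i)" by (intro DERIV_continuous[OF dv2]) (use that in auto)
    qed
    ultimately show ?thesis unfolding q_def by (intro continuous_intros)
  qed
  have cE: "continuous_on {0..} E" unfolding E_def
  proof (intro continuous_on_add continuous_on_mult continuous_on_const continuous_on_sum)
    fix i assume "i \<in> {..<N}"
    then show "continuous_on {0..} (\<lambda>s. (q s i)\<^sup>2)" "continuous_on {0..} (\<lambda>s. (z s i)\<^sup>2)"
      by (auto intro!: continuous_on_power cz cq)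
  qed
  have E0: "E 0 = 0" unfolding E_def z_def q_def using init1 init2 by simp
  have key: "E T = 0" if T: "T > 0" and g: "\<And>s. 0 \<le> s \<Longrightarrow> s < T \<Longrightarrow> good s" for T
  proof -
    have "E T = E 0"
    proof (rule DERIV_isconst_end[OF T])
      show "continuous_on {0..T} E" by (rule continuous_on_subset[OF cE]) auto
      fix x assume x: "0 < x" "x < T"
      have "(E has_real_derivative 0) (at x within {0<..})"
        by (rule DERIV_subset[OF dE]) (use x g in auto)
      moreover have "at x within {0<..} = at x" by (rule at_within_open) (use x in auto)
      ultimately show "(E has_real_derivative 0) (at x)" by simp
    qed
    then show ?thesis using E0 by simp
  qed
  have Ezero: "z t i = 0 \<and> q t i = 0" if "E t = 0" "i < N" for t i
  proof -
    have a: "(\<Sum>i<N. (q t i)\<^sup>2) \<ge> 0" "(\<Sum>i<N. (z t i)\<^sup>2) \<ge> 0" by (auto intro: sum_nonneg)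
    have c: "2 / \<epsilon>\<^sup>2 > 0" using eps by simp
    have "(\<Sum>i<N. (q t i)\<^sup>2) = 0" "(2 / \<epsilon>\<^sup>2) * (\<Sum>i<N. (z t i)\<^sup>2) = 0"
      using that(1) a mult_nonneg_nonneg[OF less_imp_le[OF c] a(2)] unfolding E_def by linarith+
    then have "(\<Sum>i<N. (q t i)\<^sup>2) = 0" "(\<Sum>i<N. (z t i)\<^sup>2) = 0" using c by auto
    then show ?thesis using that(2) by (simp add: sum_nonneg_eq_0_iff)
  qed
  define B where "B = (\<Union>i\<in>{..<N}. {0..} \<inter> (\<lambda>t. \<bar>z t i\<bar>) -` {r/2..})"
  have closedB: "closed B" unfolding B_def
  proof (intro closed_UN ballI)
    fix i assume "i \<in> {..<N}"
    then have "continuous_on {0..} (\<lambda>t. \<bar>z t i\<bar>)" using cz by (auto intro: continuous_intros)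
    then show "closed ({0..} \<inter> (\<lambda>t. \<bar>z t i\<bar>) -` {r/2..})"
      by (rule continuous_closed_preimage) auto
  qed simp
  have Bempty: "B = {}"
  proof (rule ccontr)
    assume ne: "B \<noteq> {}"
    have bdd: "bdd_below B" unfolding B_def by (auto intro!: bdd_belowI[of _ 0])
    define T0 where "T0 = Inf B"
    have T0B: "T0 \<in> B" unfolding T0_def by (rule closed_contains_Inf[OF ne bdd closedB])
    then obtain i where i: "i < N" "T0 \<ge> 0" "\<bar>z T0 i\<bar> \<ge> r/2" unfolding B_def by auto
    have gs: "good s" if "0 \<le> s" "s < T0" for s
    proof (rule ccontr)
      assume "\<not> good s"
      then obtain k where "k < N" "\<bar>z s k\<bar> \<ge> r/2" unfolding good_def by auto
      then have "s \<in> B" unfolding B_def using that by auto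
      then have "T0 \<le> s" unfolding T0_def by (rule cInf_lower[OF _ bdd])
      then show False using that by simp
    qed
    show False
    proof (cases "T0 = 0")
      case True
      then have "z T0 i = 0" unfolding z_def using init1 init2 i by simp
      then show False using i r by simp
    next
      case False
      then have "T0 > 0" using i by simp
      then have "E T0 = 0" by (rule key) (use gs in auto)
      then have "z T0 i = 0" using Ezero i by auto
      then show False using i r by simp
    qed
  qed
  fix t :: real and i :: nat assume t: "t \<ge> 0" and i: "i < N"
  show "x2 t i = x1 t i \<and> v2 t i = v1 t i"
  proof (cases "t = 0")
    case True then show ?thesis using init1 init2 i by simp
  next
    case False
    have allgood: "good s" if "s \<ge> 0" for s
    proof (rule ccontr)
      assume "\<not> good s"
      then obtain k where "k < N" "\<bar>z s k\<bar> \<ge> r/2" unfolding good_def by auto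
      then have "s \<in> B" unfolding B_def using that by auto
      then show False using Bempty by simp
    qed
    have "E t = 0" by (rule key) (use False t allgood in auto)
    then show ?thesis using Ezero i unfolding z_def q_def by auto
  qed
qed

definition om :: "real \<Rightarrow> real" where "om \<epsilon> = sqrt 2 / \<epsilon>"
definition xs :: "real \<Rightarrow> nat \<Rightarrow> real \<Rightarrow> nat \<Rightarrow> real" where
  "xs \<epsilon> N t i = (2 * real i - real N + 1) / (2 * real N) + cos (om \<epsilon> * t) / (2 * real N)"
definition vs :: "real \<Rightarrow> nat \<Rightarrow> real \<Rightarrow> nat \<Rightarrow> real" where
  "vs \<epsilon> N t i = - (om \<epsilon> * sin (om \<epsilon> * t)) / (2 * real N)"

lemma sgn_sum_aux: "(\<Sum>j<M. sgn (real i - real j)) = (if M \<le> i then real M else 2 * real i + 1 - real M)"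
proof (induction M)
  case 0 then show ?case by simp
next
  case (Suc M)
  show ?case
  proof (cases "M < i")
    case True then show ?thesis using Suc by simp
  next
    case False
    then show ?thesis
    proof (cases "M = i")
      case True then show ?thesis using Suc by simp
    next
      case False
      then have "M > i" using \<open>\<not> M < i\<close> by simp
      then show ?thesis using Suc by simp
    qed
  qed
qed

lemma xs_diff: "N \<ge> 1 \<Longrightarrow> xs \<epsilon> N t i - xs \<epsilon> N t j = (real i - real j) / real N"
  unfolding xs_def by (simp add: field_simps)

lemma cand_sol:
  assumes eps: "\<epsilon> > 0" and N: "N \<ge> 1"
  shows "is_solution \<epsilon> N (X0 N) (xs \<epsilon> N) (vs \<epsilon> N)"
  unfolding is_solution_def
proof (intro conjI allI impI)
  have Npos: "real N > 0" using N by simp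
  fix i assume i: "i < N"
  show "xs \<epsilon> N 0 i = X0 N i" unfolding xs_def X0_def using Npos by (simp add: field_simps)
  show "vs \<epsilon> N 0 i = 0" unfolding vs_def by simp
next
  have Npos: "real N > 0" using N by simp
  fix t :: real and i assume t: "t \<ge> 0" and i: "i < N"
  have "((\<lambda>s. xs \<epsilon> N s i) has_real_derivative vs \<epsilon> N t i) (at t)"
    unfolding xs_def vs_def using Npos by (auto intro!: derivative_eq_intros simp: field_simps)
  then show "((\<lambda>s. xs \<epsilon> N s i) has_real_derivative vs \<epsilon> N t i) (at t within {0..})"
    by (rule has_field_derivative_at_within)
  have gs: "(\<Sum>j\<in>{..<N} - {i}. gder (xs \<epsilon> N t i - xs \<epsilon> N t j)) = - (2 * real i + 1 - real N)"
  proof -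
    have "(\<Sum>j\<in>{..<N} - {i}. gder (xs \<epsilon> N t i - xs \<epsilon> N t j)) = (\<Sum>j\<in>{..<N} - {i}. - sgn (real i - real j))"
      by (rule sum.cong) (use N Npos in \<open>auto simp: gder_eq xs_diff\<close>)
    also have "\<dots> = (\<Sum>j<N. - sgn (real i - real j))" using i by (simp add: sum_diff1)
    also have "\<dots> = - (\<Sum>j<N. sgn (real i - real j))" by (simp add: sum_negf)
    also have "(\<Sum>j<N. sgn (real i - real j)) = 2 * real i + 1 - real N"
    proof -
      have h: "\<not> N \<le> i" using i by simp
      show ?thesis using sgn_sum_aux[of i N] unfolding if_not_P[OF h] .
    qed
    finally show ?thesis .
  qed
  have s2: "sqrt 2 * sqrt 2 = (2::real)" by simp
  have "((\<lambda>s. vs \<epsilon> N s i) has_real_derivative - (om \<epsilon> * om \<epsilon> * cos (om \<epsilon> * t)) / (2 * real N)) (at t)"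
    unfolding vs_def using Npos by (auto intro!: derivative_eq_intros simp: field_simps)
  moreover have "- (om \<epsilon> * om \<epsilon> * cos (om \<epsilon> * t)) / (2 * real N) =
      - (1 / (\<epsilon>\<^sup>2 * real N)) * (\<Sum>j\<in>{..<N} - {i}. gder (xs \<epsilon> N t i - xs \<epsilon> N t j)) - 1 / \<epsilon>\<^sup>2 * deriv Vfun (xs \<epsilon> N t i)"
  proof -
    have "- (1 / (\<epsilon>\<^sup>2 * real N)) * (\<Sum>j\<in>{..<N} - {i}. gder (xs \<epsilon> N t i - xs \<epsilon> N t j)) - 1 / \<epsilon>\<^sup>2 * deriv Vfun (xs \<epsilon> N t i)
        = (2 * real i + 1 - real N) / (\<epsilon>\<^sup>2 * real N) - 2 * xs \<epsilon> N t i / \<epsilon>\<^sup>2"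
      unfolding gs dV using eps Npos by (simp add: field_simps)
    also have "\<dots> = - (om \<epsilon> * om \<epsilon> * cos (om \<epsilon> * t)) / (2 * real N)"
      unfolding om_def xs_def using eps Npos by (simp add: field_simps power2_eq_square)
    finally show ?thesis by simp
  qed
  ultimately show "((\<lambda>s. vs \<epsilon> N s i) has_real_derivative
      - (1 / (\<epsilon>\<^sup>2 * real N)) * (\<Sum>j\<in>{..<N} - {i}. gder (xs \<epsilon> N t i - xs \<epsilon> N t j)) - 1 / \<epsilon>\<^sup>2 * deriv Vfun (xs \<epsilon> N t i)) (at t within {0..})"
    by (auto intro: has_field_derivative_at_within)
qed

lemma cand_unique:
  assumes eps: "\<epsilon> > 0" and N: "N \<ge> 1" and sol: "is_solution \<epsilon> N (X0 N) x v"
    and t: "t \<ge> 0" and i: "i < N"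
  shows "x t i = xs \<epsilon> N t i \<and> v t i = vs \<epsilon> N t i"
proof (rule uniq[OF eps cand_sol[OF eps N] sol _ _ t i])
  show "1 / real N > 0" using N by simp
  fix s :: real and i j assume "i < N" "j < N" "i \<noteq> j"
  then have "\<bar>real i - real j\<bar> \<ge> 1" by linarith
  then show "\<bar>xs \<epsilon> N s i - xs \<epsilon> N s j\<bar> \<ge> 1 / real N"
    unfolding xs_diff[OF N] using N by (simp add: abs_divide divide_right_mono)
qed

lemma sin32: "sin (2 * real m * pi + 3 * pi / 2) = -1"
proof -
  have e: "2 * real m * pi + 3 * pi / 2 = (2 * real m * pi + pi / 2) + pi" by simp
  have "sin (2 * real m * pi + 3 * pi / 2) = sin ((2 * real m * pi + pi / 2) + pi)" by (subst e) (rule refl)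
  also have "\<dots> = - sin (2 * real m * pi + pi / 2)" by (rule sin_periodic_pi)
  also have "sin (2 * real m * pi + pi / 2) = 1" by (simp add: sin_add)
  finally show ?thesis by simp
qed

lemma cp_lemma:
  fixes x v :: "real \<Rightarrow> nat \<Rightarrow> real \<Rightarrow> nat \<Rightarrow> real"
  assumes H: "\<forall>\<epsilon> N. \<epsilon> > 0 \<longrightarrow> N \<ge> 2 \<longrightarrow> is_solution \<epsilon> N (X0 N) (x \<epsilon> N) (v \<epsilon> N)"
    and that: "\<epsilon> > 0" "N \<ge> 2" "t \<ge> 0"
  shows "current_pairing N (x \<epsilon> N) (v \<epsilon> N) t \<phi> =
        - (om \<epsilon> * sin (om \<epsilon> * t)) / (2 * real N) * ((1 / real N) * (\<Sum>i<N. \<phi> (xs \<epsilon> N t i)))"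
proof -
  have eqs: "x \<epsilon> N t i = xs \<epsilon> N t i \<and> v \<epsilon> N t i = vs \<epsilon> N t i" if "i < N" for i
    by (rule cand_unique) (use that assms in auto)
  have "(\<Sum>i<N. v \<epsilon> N t i * \<phi> (x \<epsilon> N t i)) = (\<Sum>i<N. vs \<epsilon> N t i * \<phi> (xs \<epsilon> N t i))"
    by (rule sum.cong) (use eqs in auto)
  also have "\<dots> = - (om \<epsilon> * sin (om \<epsilon> * t)) / (2 * real N) * (\<Sum>i<N. \<phi> (xs \<epsilon> N t i))"
    unfolding vs_def by (simp add: sum_distrib_left)
  finally show ?thesis unfolding current_pairing_def by (simp add: algebra_simps)
qed

theorem proposition6p1:
  shows "\<exists>X :: nat \<Rightarrow> nat \<Rightarrow> real.
    ((\<lambda>N. modulated_energy N (X N) equilibrium_measure) \<longlonglongrightarrow> 0) \<and>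
    (\<forall>\<phi>. bounded_continuous_fun \<phi> \<longrightarrow>
       (\<lambda>N. (1 / real N) * (\<Sum>i<N. \<phi> (X N i))) \<longlonglongrightarrow> (\<integral>y. \<phi> y \<partial>equilibrium_measure)) \<and>
    (\<forall>\<epsilon> N. \<epsilon> > 0 \<longrightarrow> N \<ge> 2 \<longrightarrow> (\<exists>x v. is_solution \<epsilon> N (X N) x v)) \<and>
    (\<forall>x v :: real \<Rightarrow> nat \<Rightarrow> real \<Rightarrow> nat \<Rightarrow> real.
       (\<forall>\<epsilon> N. \<epsilon> > 0 \<longrightarrow> N \<ge> 2 \<longrightarrow> is_solution \<epsilon> N (X N) (x \<epsilon> N) (v \<epsilon> N)) \<longrightarrow>
       (\<forall>(e :: nat \<Rightarrow> real) (n :: nat \<Rightarrow> nat).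
          (\<forall>k. e k > 0 \<and> n k \<ge> 2) \<longrightarrow> e \<longlonglongrightarrow> 0 \<longrightarrow> filterlim n at_top sequentially \<longrightarrow>
          filterlim (\<lambda>k. e k * real (n k)) at_top sequentially \<longrightarrow>
          (\<forall>\<phi>. bounded_continuous_fun \<phi> \<longrightarrow>
             (\<forall>\<delta>>0. \<forall>\<^sub>F k in sequentially. \<forall>t\<ge>0.
                \<bar>current_pairing (n k) (x (e k) (n k)) (v (e k) (n k)) t \<phi>\<bar> < \<delta>))) \<and>
       (\<forall>t>0. \<forall>C>0. \<exists>\<phi>. bounded_continuous_fun \<phi> \<and>
          \<not> (\<exists>L. ((\<lambda>(\<epsilon>, N). current_pairing N (x \<epsilon> N) (v \<epsilon> N) t \<phi>) \<longlongrightarrow> L)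
                   (bounded_regime C))))"
proof (intro exI[of _ X0] conjI)
  show "(\<lambda>N. modulated_energy N (X0 N) equilibrium_measure) \<longlonglongrightarrow> 0"
    unfolding equilibrium_is_U by (rule modulated_lim)
  show "\<forall>\<phi>. bounded_continuous_fun \<phi> \<longrightarrow>
       (\<lambda>N. (1 / real N) * (\<Sum>i<N. \<phi> (X0 N i))) \<longlonglongrightarrow> (\<integral>y. \<phi> y \<partial>equilibrium_measure)"
  proof (intro allI impI)
    fix \<phi> :: "real \<Rightarrow> real" assume "bounded_continuous_fun \<phi>"
    then have c: "continuous_on UNIV \<phi>" unfolding bounded_continuous_fun_def by simp
    have c': "continuous_on {-1/2..1/2} \<phi>" by (rule continuous_on_subset[OF c]) auto
    have "(\<integral>y. \<phi> y \<partial>equilibrium_measure) = integral {-1/2..1/2} \<phi>"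
      unfolding equilibrium_is_U by (rule U_int(2)[OF c' borel_measurable_continuous_onI[OF c]])
    then show "(\<lambda>N. (1 / real N) * (\<Sum>i<N. \<phi> (X0 N i))) \<longlonglongrightarrow> (\<integral>y. \<phi> y \<partial>equilibrium_measure)"
      using riemann[OF c'] by simp
  qed
  show "\<forall>\<epsilon> N. \<epsilon> > 0 \<longrightarrow> N \<ge> 2 \<longrightarrow> (\<exists>x v. is_solution \<epsilon> N (X0 N) x v)"
  proof (intro allI impI)
    fix \<epsilon> :: real and N :: nat assume "\<epsilon> > 0" "N \<ge> 2"
    then have "is_solution \<epsilon> N (X0 N) (xs \<epsilon> N) (vs \<epsilon> N)" by (intro cand_sol) auto
    then show "\<exists>x v. is_solution \<epsilon> N (X0 N) x v" by blast
  qed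
  show "\<forall>x v :: real \<Rightarrow> nat \<Rightarrow> real \<Rightarrow> nat \<Rightarrow> real.
       (\<forall>\<epsilon> N. \<epsilon> > 0 \<longrightarrow> N \<ge> 2 \<longrightarrow> is_solution \<epsilon> N (X0 N) (x \<epsilon> N) (v \<epsilon> N)) \<longrightarrow>
       (\<forall>(e :: nat \<Rightarrow> real) (n :: nat \<Rightarrow> nat).
          (\<forall>k. e k > 0 \<and> n k \<ge> 2) \<longrightarrow> e \<longlonglongrightarrow> 0 \<longrightarrow> filterlim n at_top sequentially \<longrightarrow>
          filterlim (\<lambda>k. e k * real (n k)) at_top sequentially \<longrightarrow>
          (\<forall>\<phi>. bounded_continuous_fun \<phi> \<longrightarrow>
             (\<forall>\<delta>>0. \<forall>\<^sub>F k in sequentially. \<forall>t\<ge>0.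
                \<bar>current_pairing (n k) (x (e k) (n k)) (v (e k) (n k)) t \<phi>\<bar> < \<delta>))) \<and>
       (\<forall>t>0. \<forall>C>0. \<exists>\<phi>. bounded_continuous_fun \<phi> \<and>
          \<not> (\<exists>L. ((\<lambda>(\<epsilon>, N). current_pairing N (x \<epsilon> N) (v \<epsilon> N) t \<phi>) \<longlongrightarrow> L)
                   (bounded_regime C)))"
  proof (intro allI impI conjI, goal_cases)
    case (1 x v e n \<phi> \<delta>)
    note H = 1(1)
    have pos: "\<forall>k. e k > 0 \<and> n k \<ge> 2" using 1(2) .
    have en: "filterlim (\<lambda>k. e k * real (n k)) at_top sequentially" using 1(5) .
    have bcf: "bounded_continuous_fun \<phi>" using 1(6) .
    have \<delta>: "\<delta> > 0" using 1(7) .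
    note cp = cp_lemma[OF H]
        obtain B where B: "\<And>y. \<bar>\<phi> y\<bar> \<le> B"
          using bcf unfolding bounded_continuous_fun_def bounded_iff by auto
        define B1 where "B1 = \<bar>B\<bar> + 1"
        have B1: "B1 > 0" "\<And>y. \<bar>\<phi> y\<bar> \<le> B1"
        proof -
          show "B1 > 0" unfolding B1_def by simp
          fix y show "\<bar>\<phi> y\<bar> \<le> B1" unfolding B1_def using B[of y] by linarith
        qed
        have avg: "\<bar>(1 / real N) * (\<Sum>i<N. \<phi> (xs \<epsilon> N t i))\<bar> \<le> B1" if "N \<ge> 1" for N \<epsilon> t
        proof -
          have "\<bar>\<Sum>i<N. \<phi> (xs \<epsilon> N t i)\<bar> \<le> (\<Sum>i<N. \<bar>\<phi> (xs \<epsilon> N t i)\<bar>)" by (rule sum_abs)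
          also have "\<dots> \<le> (\<Sum>i<N. B1)" by (rule sum_mono) (use B1 in auto)
          finally have "\<bar>\<Sum>i<N. \<phi> (xs \<epsilon> N t i)\<bar> \<le> real N * B1" by simp
          then show ?thesis using that by (simp add: abs_mult field_simps)
        qed
        have bound: "\<bar>current_pairing N (x \<epsilon> N) (v \<epsilon> N) t \<phi>\<bar> \<le> sqrt 2 * B1 / (2 * (\<epsilon> * real N))"
          if "\<epsilon> > 0" "N \<ge> 2" "t \<ge> 0" for \<epsilon> N t
        proof -
          have om0: "om \<epsilon> \<ge> 0" unfolding om_def using that by simp
          have "\<bar>current_pairing N (x \<epsilon> N) (v \<epsilon> N) t \<phi>\<bar>
              = (om \<epsilon> * \<bar>sin (om \<epsilon> * t)\<bar> / (2 * real N)) * \<bar>(1 / real N) * (\<Sum>i<N. \<phi> (xs \<epsilon> N t i))\<bar>"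
            unfolding cp[OF that] using om0 by (simp add: abs_mult abs_divide)
          also have "\<dots> \<le> (om \<epsilon> * 1 / (2 * real N)) * B1"
            using om0 that avg[of N \<epsilon> t] abs_sin_le_one[of "om \<epsilon> * t"]
            by (intro mult_mono divide_right_mono mult_left_mono) auto
          also have "\<dots> = sqrt 2 * B1 / (2 * (\<epsilon> * real N))" unfolding om_def by simp
          finally show ?thesis .
        qed
        define Z where "Z = sqrt 2 * B1 / \<delta> + 1"
        have Z: "Z > 0" "sqrt 2 * B1 / (2 * Z) < \<delta>"
        proof -
          have q: "sqrt 2 * B1 / \<delta> > 0" using B1 \<delta> by simp
          then show "Z > 0" unfolding Z_def by simp
          have zz: "2 * Z * \<delta> = 2 * (sqrt 2 * B1) + 2 * \<delta>" unfolding Z_def using \<delta> by (simp add: field_simps)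
          have "sqrt 2 * B1 > 0" using B1 by simp
          then have "sqrt 2 * B1 < 2 * Z * \<delta>" unfolding zz using \<delta> by linarith
          then show "sqrt 2 * B1 / (2 * Z) < \<delta>" using \<open>Z > 0\<close> by (simp add: field_simps)
        qed
        have "\<forall>\<^sub>F k in sequentially. Z \<le> e k * real (n k)" using en unfolding filterlim_at_top by auto
        then show "\<forall>\<^sub>F k in sequentially. \<forall>t\<ge>0. \<bar>current_pairing (n k) (x (e k) (n k)) (v (e k) (n k)) t \<phi>\<bar> < \<delta>"
        proof (rule eventually_mono, intro allI impI)
          fix k t assume Zk: "Z \<le> e k * real (n k)" and t: "(t::real) \<ge> 0"
          have ek: "e k > 0" "n k \<ge> 2" using pos by auto
          have "\<bar>current_pairing (n k) (x (e k) (n k)) (v (e k) (n k)) t \<phi>\<bar> \<le> sqrt 2 * B1 / (2 * (e k * real (n k)))"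
            by (rule bound[OF ek t])
          also have "\<dots> \<le> sqrt 2 * B1 / (2 * Z)"
            using Zk Z(1) B1(1) by (intro divide_left_mono) auto
          also have "\<dots> < \<delta>" by (rule Z(2))
          finally show "\<bar>current_pairing (n k) (x (e k) (n k)) (v (e k) (n k)) t \<phi>\<bar> < \<delta>" .
        qed
  next
    case (2 x v t C)
    note H = 2(1)
    have t: "t > 0" using 2(2) .
    have C: "C > 0" using 2(3) .
    note cp = cp_lemma[OF H]
    show ?case
      proof (intro exI conjI)
        show "bounded_continuous_fun (\<lambda>_. 1)" unfolding bounded_continuous_fun_def
          by (auto intro: continuous_on_const)
        have cp1: "current_pairing N (x \<epsilon> N) (v \<epsilon> N) t (\<lambda>_. 1) = - (om \<epsilon> * sin (om \<epsilon> * t)) / (2 * real N)"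
          if "\<epsilon> > 0" "N \<ge> 2" for \<epsilon> N
          using cp[OF that less_imp_le[OF t], where \<phi>="\<lambda>_. 1"] that by simp
        show "\<not> (\<exists>L. ((\<lambda>(\<epsilon>, N). current_pairing N (x \<epsilon> N) (v \<epsilon> N) t (\<lambda>_. 1)) \<longlongrightarrow> L) (bounded_regime C))"
        proof
          assume "\<exists>L. ((\<lambda>(\<epsilon>, N). current_pairing N (x \<epsilon> N) (v \<epsilon> N) t (\<lambda>_. 1)) \<longlongrightarrow> L) (bounded_regime C)"
          then obtain L where L: "((\<lambda>(\<epsilon>, N). current_pairing N (x \<epsilon> N) (v \<epsilon> N) t (\<lambda>_. 1)) \<longlongrightarrow> L) (bounded_regime C)"
            by blast
          define r0 where "r0 = sqrt 2 / (4 * C)"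
          have r0: "r0 > 0" unfolding r0_def using C by simp
          have "\<forall>\<^sub>F p in bounded_regime C. dist ((\<lambda>(\<epsilon>, N). current_pairing N (x \<epsilon> N) (v \<epsilon> N) t (\<lambda>_. 1)) p) L < r0"
            by (rule tendstoD[OF L r0])
          then obtain Pf Pg where P: "eventually Pf (at_right 0)" "eventually Pg at_top"
            "\<And>\<epsilon> N. Pf \<epsilon> \<Longrightarrow> Pg N \<Longrightarrow> \<epsilon> * real N \<le> C \<Longrightarrow> dist (current_pairing N (x \<epsilon> N) (v \<epsilon> N) t (\<lambda>_. 1)) L < r0"
            unfolding bounded_regime_def eventually_inf_principal eventually_prod_filter by auto
          obtain b where b: "b > 0" "\<And>\<epsilon>. \<epsilon> > 0 \<Longrightarrow> \<epsilon> < b \<Longrightarrow> Pf \<epsilon>"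
            using P(1) unfolding eventually_at_right_field by auto
          obtain M where M: "\<And>N. N \<ge> M \<Longrightarrow> Pg N" using P(2) unfolding eventually_at_top_linorder by auto
          define N where "N = max M 2"
          have N: "N \<ge> 2" "Pg N" unfolding N_def using M by auto
          have Npos: "real N > 0" using N by simp
          define A where "A = sqrt 2 * t / b + sqrt 2 * t * real N / C"
          have A0: "A \<ge> 0" unfolding A_def using t b C by simp
          define m where "m = nat \<lceil>A\<rceil> + 1"
          have mA: "real m > A" unfolding m_def using A0 by linarith
          have m1: "real m > 0" using mA A0 by linarith
          have mb: "real m * b > sqrt 2 * t" using mA b(1) t C Npos unfolding A_def
            by (smt (verit, best) divide_nonneg_nonneg le_divide_eq mult_nonneg_nonneg of_nat_0_le_iff real_sqrt_ge_zero)
          have mC: "real m * C > sqrt 2 * t * real N" using mA b(1) t C Npos unfolding A_def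
            by (smt (verit, best) divide_nonneg_nonneg le_divide_eq mult_nonneg_nonneg of_nat_0_le_iff real_sqrt_ge_zero)
          define \<epsilon>1 where "\<epsilon>1 = sqrt 2 * t / (2 * real m * pi)"
          define \<epsilon>2 where "\<epsilon>2 = sqrt 2 * t / (2 * real m * pi + 3 * pi / 2)"
          have pi1: "pi > 1" using pi_gt3 by simp
          have e1: "\<epsilon>1 > 0" unfolding \<epsilon>1_def using t m1 by simp
          have e2: "\<epsilon>2 > 0" unfolding \<epsilon>2_def using t m1 by (simp add: pos_add_strict)
          have p1: "2 * real m * pi > 0" using m1 by simp
          have p2: "2 * real m * pi + 3 * pi / 2 > 0" using p1 by (simp add: add_pos_pos)
          have e21: "\<epsilon>2 \<le> \<epsilon>1" unfolding \<epsilon>1_def \<epsilon>2_def using t p1 p2 m1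
            by (intro divide_left_mono mult_pos_pos) auto
          have e1b: "\<epsilon>1 < b"
          proof -
            have "sqrt 2 * t < real m * b" by (rule mb)
            also have "\<dots> \<le> (2 * real m * pi) * b" using m1 b(1) pi1 by (intro mult_right_mono) auto
            finally show ?thesis unfolding \<epsilon>1_def using m1 by (simp add: field_simps)
          qed
          have e1C: "\<epsilon>1 * real N \<le> C"
          proof -
            have "sqrt 2 * t * real N < real m * C" by (rule mC)
            also have "\<dots> \<le> (2 * real m * pi) * C" using m1 C pi1 by (intro mult_right_mono) auto
            finally show ?thesis unfolding \<epsilon>1_def using m1 by (simp add: field_simps)
          qed
          have e2C: "\<epsilon>2 * real N \<le> C" using e21 e1C Npos by (smt (verit) mult_right_mono of_nat_0_le_iff)
          have om1: "om \<epsilon>1 * t = 2 * real m * pi" unfolding om_def \<epsilon>1_def using t m1 by (simp add: field_simps)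
          have om2: "om \<epsilon>2 * t = 2 * real m * pi + 3 * pi / 2" unfolding om_def \<epsilon>2_def using t m1
            by (simp add: field_simps)
          have d1: "dist (current_pairing N (x \<epsilon>1 N) (v \<epsilon>1 N) t (\<lambda>_. 1)) L < r0"
            by (rule P(3)) (use b e1 e1b N e1C in auto)
          have d2: "dist (current_pairing N (x \<epsilon>2 N) (v \<epsilon>2 N) t (\<lambda>_. 1)) L < r0"
            by (rule P(3)) (use b e2 e21 e1b N e2C in auto)
          have v1: "current_pairing N (x \<epsilon>1 N) (v \<epsilon>1 N) t (\<lambda>_. 1) = 0"
            unfolding cp1[OF e1 N(1)] om1 by simp
          have v2: "current_pairing N (x \<epsilon>2 N) (v \<epsilon>2 N) t (\<lambda>_. 1) = sqrt 2 / (2 * (\<epsilon>2 * real N))"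
            unfolding cp1[OF e2 N(1)] om2 sin32 unfolding om_def by simp
          have "sqrt 2 / (2 * (\<epsilon>2 * real N)) \<ge> sqrt 2 / (2 * C)"
            using e2C e2 Npos C by (intro divide_left_mono mult_pos_pos) auto
          moreover have "sqrt 2 / (2 * (\<epsilon>2 * real N)) < 2 * r0"
            using d1 d2 unfolding v1 v2 dist_real_def by linarith
          ultimately show False unfolding r0_def by simp
        qed
      qed
  qed
qed

end
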